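(* The relation $\le_{\rm cx}$ is a preorder (reflexive and transitive) on the space $L^0$ of all real-valued random variables on an atomless probability space.
   Context: An expectation $\mathbb E[Z]$ is well-defined if $\mathbb E[\max\{Z,0\}]<\infty$ or $\mathbb E[\max\{-Z,0\}]<\infty$. $X\le_{\rm cx}Y$ means $\mathbb E[u(X)]\le\mathbb E[u(Y)]$ for all convex $u:\mathbb R\to\mathbb R$ such that both expectations are well-defined. *)

theory Defs
  imports "HOL-Probability.Probability"
begin

definition atomless :: "'a measure \<Rightarrow> bool" where
  "atomless M \<longleftrightarrow> (\<forall>A\<in>sets M. 0 < emeasure M A \<longrightarrow>
      (\<exists>B\<in>sets M. B \<subseteq> A \<and> 0 < emeasure M B \<and> emeasure M B < emeasure M A))"

definition exp_welldef :: "'a measure \<Rightarrow> ('a \<Rightarrow> real) \<Rightarrow> bool" where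
  "exp_welldef M Z \<longleftrightarrow>
     (\<integral>\<^sup>+ x. ennreal (max (Z x) 0) \<partial>M) < \<infinity> \<or> (\<integral>\<^sup>+ x. ennreal (max (- Z x) 0) \<partial>M) < \<infinity>"

text \<open>Extended-real expectation E[Z] = E[max(Z,0)] - E[max(-Z,0)]
 (meaningful when exp_welldef M Z holds).\<close>
definition ext_expectation :: "'a measure \<Rightarrow> ('a \<Rightarrow> real) \<Rightarrow> ereal" where
  "ext_expectation M Z =
     enn2ereal (\<integral>\<^sup>+ x. ennreal (max (Z x) 0) \<partial>M) - enn2ereal (\<integral>\<^sup>+ x. ennreal (max (- Z x) 0) \<partial>M)"

definition cx_le :: "'a measure \<Rightarrow> ('a \<Rightarrow> real) \<Rightarrow> ('a \<Rightarrow> real) \<Rightarrow> bool" where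
  "cx_le M X Y \<longleftrightarrow> (\<forall>u::real \<Rightarrow> real. convex_on UNIV u \<longrightarrow>
      exp_welldef M (\<lambda>x. u (X x)) \<longrightarrow> exp_welldef M (\<lambda>x. u (Y x)) \<longrightarrow>
      ext_expectation M (\<lambda>x. u (X x)) \<le> ext_expectation M (\<lambda>x. u (Y x)))"

end

theory Submission
  imports Defs
begin

lemma convex_on_max0:
  fixes u :: "real \<Rightarrow> real"
  assumes "convex_on UNIV u"
  shows "convex_on UNIV (\<lambda>x. max (u x) 0)"
proof (rule convex_onI)
  fix t x y :: real assume t: "0 < t" "t < 1"
  have "u ((1 - t) *\<^sub>R x + t *\<^sub>R y) \<le> (1 - t) * u x + t * u y"
    using assms t by (auto simp: convex_on_def)
  moreover have "(1 - t) * u x \<le> (1 - t) * max (u x) 0" using t by (intro mult_left_mono) auto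
  moreover have "t * u y \<le> t * max (u y) 0" using t by (intro mult_left_mono) auto
  moreover have "0 \<le> (1 - t) * max (u x) 0 + t * max (u y) 0" using t by simp
  ultimately show "max (u ((1 - t) *\<^sub>R x + t *\<^sub>R y)) 0 \<le> (1 - t) * max (u x) 0 + t * max (u y) 0"
    by linarith
qed (simp add: convex_UNIV)

lemma pos_part_facts:
  fixes u :: "real \<Rightarrow> real" and Y :: "'a \<Rightarrow> real"
  shows "exp_welldef M (\<lambda>x. max (u (Y x)) 0)"
    and "ext_expectation M (\<lambda>x. max (u (Y x)) 0) = enn2ereal (\<integral>\<^sup>+ x. ennreal (max (u (Y x)) 0) \<partial>M)"
proof -
  have z: "(\<integral>\<^sup>+ x. ennreal (max (- max (u (Y x)) 0) 0) \<partial>M) = 0"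
    by (simp add: ennreal_eq_0_iff)
  show "exp_welldef M (\<lambda>x. max (u (Y x)) 0)" unfolding exp_welldef_def using z by simp
  show "ext_expectation M (\<lambda>x. max (u (Y x)) 0) = enn2ereal (\<integral>\<^sup>+ x. ennreal (max (u (Y x)) 0) \<partial>M)"
    unfolding ext_expectation_def using z by (simp add: zero_ennreal.rep_eq)
qed

lemma cx_trans:
  assumes XY: "cx_le M X Y" and YZ: "cx_le M Y Z"
  shows "cx_le M X Z"
  unfolding cx_le_def
proof (intro allI impI)
  fix u :: "real \<Rightarrow> real"
  assume u: "convex_on UNIV u" and wX: "exp_welldef M (\<lambda>x. u (X x))"
    and wZ: "exp_welldef M (\<lambda>x. u (Z x))"
  show "ext_expectation M (\<lambda>x. u (X x)) \<le> ext_expectation M (\<lambda>x. u (Z x))"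
  proof (cases "exp_welldef M (\<lambda>x. u (Y x))")
    case True
    then show ?thesis using XY YZ u wX wZ unfolding cx_le_def by (meson order_trans)
  next
    case False
    then have pY: "(\<integral>\<^sup>+ x. ennreal (max (u (Y x)) 0) \<partial>M) = \<infinity>"
      unfolding exp_welldef_def by (simp add: less_top[symmetric])
    have "ext_expectation M (\<lambda>x. max (u (Y x)) 0) \<le> ext_expectation M (\<lambda>x. max (u (Z x)) 0)"
      using YZ convex_on_max0[OF u] pos_part_facts unfolding cx_le_def by blast
    then have "enn2ereal (\<integral>\<^sup>+ x. ennreal (max (u (Y x)) 0) \<partial>M) \<le> enn2ereal (\<integral>\<^sup>+ x. ennreal (max (u (Z x)) 0) \<partial>M)"
      by (simp add: pos_part_facts)
    then have pZ: "(\<integral>\<^sup>+ x. ennreal (max (u (Z x)) 0) \<partial>M) = \<infinity>"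
      using pY by (simp add: top.extremum_unique)
    then have nZ: "(\<integral>\<^sup>+ x. ennreal (max (- u (Z x)) 0) \<partial>M) < \<infinity>"
      using wZ unfolding exp_welldef_def by simp
    then have "ext_expectation M (\<lambda>x. u (Z x)) = \<infinity>"
      unfolding ext_expectation_def using pZ
      by (simp add: top.not_eq_extremum)
    then show ?thesis by simp
  qed
qed

theorem proposition2:
  fixes M :: "'a measure"
  assumes "prob_space M" and "atomless M"
  shows "(\<forall>X\<in>borel_measurable M. cx_le M X X) \<and>
         (\<forall>X\<in>borel_measurable M. \<forall>Y\<in>borel_measurable M. \<forall>Z\<in>borel_measurable M.
            cx_le M X Y \<longrightarrow> cx_le M Y Z \<longrightarrow> cx_le M X Z)"
proof (intro conjI ballI impI)
  fix X show "cx_le M X X" by (simp add: cx_le_def)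
next
  fix X Y Z assume "cx_le M X Y" "cx_le M Y Z" then show "cx_le M X Z" by (rule cx_trans)
qed

end
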